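(* Let $\mathcal{X}$ be a finite set, $\pi$ a probability mass function on $\mathcal{X}$ with full support, $P$ a $\pi$-stationary transition matrix, and let a group $\mathcal{G}$ act on $\mathcal{X}$ with orbits $(\mathcal{O}_i)_{i=1}^k$ and Gibbs orbit kernel $G$. Then $D^\pi_{KL}(GPG\|\Pi)=D^{\overline{\pi}}_{KL}(\overline{P}\|\overline{\Pi})$.
   Context: $G(x,y)=\pi(y)/\pi(\mathcal{O}(x))$ for $y$ in the orbit $\mathcal{O}(x)$ of $x$, else $0$, with $\pi(A)=\sum_{z\in A}\pi(z)$. $\Pi$ is the matrix with every row equal to $\pi$. $\overline{\pi}=(\pi(\mathcal{O}_1),\dots,\pi(\mathcal{O}_k))$, $\overline{\Pi}$ is the $k\times k$ matrix with every row $\overline{\pi}$, and $\overline{P}(i,j)=\frac{1}{\pi(\mathcal{O}_i)}\sum_{x\in\mathcal{O}_i,y\in\mathcal{O}_j}\pi(x)P(x,y)$. For a distribution $\mu$ and transition matrices $K,L$ on the same finite set, $D^\mu_{KL}(K\|L)=\sum_{x,y}\mu(x)K(x,y)\log\frac{K(x,y)}{L(x,y)}$ with $0\log(0/a)=0$. *)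

theory Defs
  imports "HOL-Analysis.Analysis" "HOL-Algebra.Group_Action"
begin

text \<open>Transition matrices on a finite state set X are functions 'a => 'a => real,
  only their values on X x X matter.\<close>

definition pmf_full_support :: "'a set \<Rightarrow> ('a \<Rightarrow> real) \<Rightarrow> bool" where
  "pmf_full_support X \<pi> \<longleftrightarrow> (\<forall>x\<in>X. \<pi> x > 0) \<and> (\<Sum>x\<in>X. \<pi> x) = 1"

definition transition_matrix :: "'a set \<Rightarrow> ('a \<Rightarrow> 'a \<Rightarrow> real) \<Rightarrow> bool" where
  "transition_matrix X P \<longleftrightarrow> (\<forall>x\<in>X. \<forall>y\<in>X. P x y \<ge> 0) \<and> (\<forall>x\<in>X. (\<Sum>y\<in>X. P x y) = 1)"

definition stationary :: "'a set \<Rightarrow> ('a \<Rightarrow> real) \<Rightarrow> ('a \<Rightarrow> 'a \<Rightarrow> real) \<Rightarrow> bool" where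
  "stationary X \<pi> P \<longleftrightarrow> (\<forall>y\<in>X. (\<Sum>x\<in>X. \<pi> x * P x y) = \<pi> y)"

definition mass :: "('a \<Rightarrow> real) \<Rightarrow> 'a set \<Rightarrow> real" where
  "mass \<pi> A = (\<Sum>z\<in>A. \<pi> z)"

definition gibbs_orbit_kernel ::
  "('g, 'h) monoid_scheme \<Rightarrow> ('g \<Rightarrow> 'a \<Rightarrow> 'a) \<Rightarrow> ('a \<Rightarrow> real) \<Rightarrow> 'a \<Rightarrow> 'a \<Rightarrow> real" where
  "gibbs_orbit_kernel G \<phi> \<pi> x y =
     (if y \<in> orbit G \<phi> x then \<pi> y / mass \<pi> (orbit G \<phi> x) else 0)"

definition mat_prod :: "'a set \<Rightarrow> ('a \<Rightarrow> 'a \<Rightarrow> real) \<Rightarrow> ('a \<Rightarrow> 'a \<Rightarrow> real) \<Rightarrow> 'a \<Rightarrow> 'a \<Rightarrow> real" where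
  "mat_prod X K L x y = (\<Sum>z\<in>X. K x z * L z y)"

definition const_rows :: "('a \<Rightarrow> real) \<Rightarrow> 'a \<Rightarrow> 'a \<Rightarrow> real" where
  "const_rows \<mu> x y = \<mu> y"

definition KL_div :: "'a set \<Rightarrow> ('a \<Rightarrow> real) \<Rightarrow> ('a \<Rightarrow> 'a \<Rightarrow> real) \<Rightarrow> ('a \<Rightarrow> 'a \<Rightarrow> real) \<Rightarrow> real" where
  "KL_div X \<mu> K L = (\<Sum>x\<in>X. \<Sum>y\<in>X.
      (if K x y = 0 then 0 else \<mu> x * K x y * ln (K x y / L x y)))"

text \<open>Lumped quantities, indexed by the orbits themselves.\<close>
definition lumped_dist :: "('a \<Rightarrow> real) \<Rightarrow> 'a set \<Rightarrow> real" where
  "lumped_dist \<pi> A = mass \<pi> A"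

definition lumped_matrix :: "('a \<Rightarrow> real) \<Rightarrow> ('a \<Rightarrow> 'a \<Rightarrow> real) \<Rightarrow> 'a set \<Rightarrow> 'a set \<Rightarrow> real" where
  "lumped_matrix \<pi> P A B = (1 / mass \<pi> A) * (\<Sum>x\<in>A. \<Sum>y\<in>B. \<pi> x * P x y)"

end

theory Submission
  imports Defs
begin

context group_action begin

lemma orb_sub: "x \<in> E \<Longrightarrow> orbit G \<phi> x \<subseteq> E"
  unfolding orbit_def using element_image by blast

lemma orb_eq: "x \<in> E \<Longrightarrow> y \<in> E \<Longrightarrow> y \<in> orbit G \<phi> x \<Longrightarrow> orbit G \<phi> y = orbit G \<phi> x"
proof -
  assume a: "x \<in> E" "y \<in> E" "y \<in> orbit G \<phi> x"
  show ?thesis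
  proof
    show "orbit G \<phi> y \<subseteq> orbit G \<phi> x"
      using a orb_sub orbit_trans by blast
    show "orbit G \<phi> x \<subseteq> orbit G \<phi> y"
      using a orb_sub orbit_trans orbit_sym by blast
  qed
qed

lemma orb_mem_iff: "x \<in> E \<Longrightarrow> y \<in> E \<Longrightarrow> y \<in> orbit G \<phi> x \<longleftrightarrow> x \<in> orbit G \<phi> y"
  using orbit_sym by blast

lemma orbits_elem: "A \<in> orbits G E \<phi> \<Longrightarrow> x \<in> A \<Longrightarrow> x \<in> E \<and> orbit G \<phi> x = A"
  unfolding orbits_def using orb_sub orb_eq by blast

lemma orbits_sub: "A \<in> orbits G E \<phi> \<Longrightarrow> A \<subseteq> E \<and> A \<noteq> {}"
  unfolding orbits_def using orb_sub orbit_refl by blast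

lemma orbit_in: "x \<in> E \<Longrightarrow> orbit G \<phi> x \<in> orbits G E \<phi>"
  unfolding orbits_def by blast

lemma kernel_formula:
  assumes fin: "finite E" and x: "x \<in> E" and y: "y \<in> E"
  shows "mat_prod E (mat_prod E (gibbs_orbit_kernel G \<phi> \<pi>) P) (gibbs_orbit_kernel G \<phi> \<pi>) x y
     = lumped_matrix \<pi> P (orbit G \<phi> x) (orbit G \<phi> y) * \<pi> y / mass \<pi> (orbit G \<phi> y)"
proof -
  let ?O = "orbit G \<phi>"
  have inner: "mat_prod E (gibbs_orbit_kernel G \<phi> \<pi>) P x w
      = (\<Sum>z\<in>?O x. \<pi> z * P z w) / mass \<pi> (?O x)" for w
  proof -
    have "mat_prod E (gibbs_orbit_kernel G \<phi> \<pi>) P x w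
       = (\<Sum>z\<in>E. if z \<in> ?O x then \<pi> z * P z w / mass \<pi> (?O x) else 0)"
      unfolding mat_prod_def gibbs_orbit_kernel_def by (rule sum.cong) auto
    also have "\<dots> = (\<Sum>z\<in>?O x. \<pi> z * P z w / mass \<pi> (?O x))"
      using orb_sub[OF x] fin by (simp add: sum.If_cases Int_absorb1)
    also have "\<dots> = (\<Sum>z\<in>?O x. \<pi> z * P z w) / mass \<pi> (?O x)"
      by (simp add: sum_divide_distrib)
    finally show ?thesis .
  qed
  have "mat_prod E (mat_prod E (gibbs_orbit_kernel G \<phi> \<pi>) P) (gibbs_orbit_kernel G \<phi> \<pi>) x y
     = (\<Sum>w\<in>E. if w \<in> ?O y then mat_prod E (gibbs_orbit_kernel G \<phi> \<pi>) P x w * (\<pi> y / mass \<pi> (?O y)) else 0)"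
    unfolding mat_prod_def[of E "mat_prod E _ _"]
  proof (rule sum.cong)
    fix w assume w: "w \<in> E"
    show "mat_prod E (gibbs_orbit_kernel G \<phi> \<pi>) P x w * gibbs_orbit_kernel G \<phi> \<pi> w y
      = (if w \<in> ?O y then mat_prod E (gibbs_orbit_kernel G \<phi> \<pi>) P x w * (\<pi> y / mass \<pi> (?O y)) else 0)"
      unfolding gibbs_orbit_kernel_def[of G \<phi> \<pi> w y]
      using orb_mem_iff[OF w y] orb_eq[OF w y] by auto
  qed simp
  also have "\<dots> = (\<Sum>w\<in>?O y. mat_prod E (gibbs_orbit_kernel G \<phi> \<pi>) P x w * (\<pi> y / mass \<pi> (?O y)))"
    using orb_sub[OF y] fin by (simp add: sum.If_cases Int_absorb1)
  also have "\<dots> = (\<Sum>w\<in>?O y. \<Sum>z\<in>?O x. \<pi> z * P z w) / mass \<pi> (?O x) * (\<pi> y / mass \<pi> (?O y))"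
    by (simp add: inner sum_distrib_right sum_divide_distrib)
  also have "(\<Sum>w\<in>?O y. \<Sum>z\<in>?O x. \<pi> z * P z w) = (\<Sum>z\<in>?O x. \<Sum>w\<in>?O y. \<pi> z * P z w)"
    by (rule sum.swap)
  finally show ?thesis unfolding lumped_matrix_def by simp
qed

end

theorem proposition6p3:
  fixes X :: "'a set" and \<pi> :: "'a \<Rightarrow> real" and P :: "'a \<Rightarrow> 'a \<Rightarrow> real"
    and G :: "('g, 'h) monoid_scheme" and \<phi> :: "'g \<Rightarrow> 'a \<Rightarrow> 'a"
  assumes "finite X"
    and "pmf_full_support X \<pi>"
    and "transition_matrix X P"
    and "stationary X \<pi> P"
    and "group G"
    and "group_action G X \<phi>"
  shows "KL_div X \<pi>
           (mat_prod X (mat_prod X (gibbs_orbit_kernel G \<phi> \<pi>) P) (gibbs_orbit_kernel G \<phi> \<pi>))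
           (const_rows \<pi>)
       = KL_div (orbits G X \<phi>) (lumped_dist \<pi>)
           (lumped_matrix \<pi> P) (const_rows (lumped_dist \<pi>))"
proof -
  interpret ga: group_action G X \<phi> by fact
  note fin = assms(1)
  have pos: "\<And>x. x \<in> X \<Longrightarrow> \<pi> x > 0" using assms(2) unfolding pmf_full_support_def by auto
  let ?O = "orbit G \<phi>"
  let ?K = "mat_prod X (mat_prod X (gibbs_orbit_kernel G \<phi> \<pi>) P) (gibbs_orbit_kernel G \<phi> \<pi>)"
  let ?m = "mass \<pi>"
  let ?Q = "lumped_matrix \<pi> P"
  define c where "c A B = (if ?Q A B = 0 then 0 else ?Q A B * ln (?Q A B / ?m B))" for A B
  have mpos: "?m A > 0" if "A \<in> orbits G X \<phi>" for A
  proof -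
    from ga.orbits_sub[OF that] obtain a where a: "a \<in> A" "A \<subseteq> X" by blast
    have finA: "finite A" using a fin finite_subset by blast
    have "\<pi> a \<le> ?m A" unfolding mass_def
      using a finA pos by (intro member_le_sum) (auto intro: less_imp_le)
    thus ?thesis using pos a by fastforce
  qed
  have tm: "(if ?K x y = 0 then 0 else \<pi> x * ?K x y * ln (?K x y / const_rows \<pi> x y))
     = \<pi> x * \<pi> y / ?m (?O y) * c (?O x) (?O y)" if x: "x \<in> X" and y: "y \<in> X" for x y
  proof -
    have K: "?K x y = ?Q (?O x) (?O y) * \<pi> y / ?m (?O y)"
      by (rule ga.kernel_formula[OF fin x y])
    have my: "?m (?O y) > 0" using mpos ga.orbit_in[OF y] by blast
    have py: "\<pi> y > 0" using pos y by blast
    show ?thesis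
    proof (cases "?Q (?O x) (?O y) = 0")
      case True thus ?thesis using K unfolding c_def by simp
    next
      case False
      have "?K x y / const_rows \<pi> x y = ?Q (?O x) (?O y) / ?m (?O y)"
        using K py my unfolding const_rows_def by (simp add: field_simps)
      moreover have "?K x y \<noteq> 0" using K False py my by simp
      ultimately show ?thesis using False py my unfolding c_def
        apply (simp only: if_False if_not_P)
        apply (simp only: K)
        by (simp add: field_simps)
    qed
  qed
  have "KL_div X \<pi> ?K (const_rows \<pi>)
      = (\<Sum>x\<in>X. \<Sum>y\<in>X. \<pi> x * \<pi> y / ?m (?O y) * c (?O x) (?O y))"
    unfolding KL_div_def by (intro sum.cong refl) (simp add: tm)
  also have "\<dots> = (\<Sum>x\<in>X. \<Sum>B\<in>orbits G X \<phi>. \<Sum>y\<in>B. \<pi> x * \<pi> y / ?m (?O y) * c (?O x) (?O y))"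
    by (intro sum.cong refl ga.disjoint_sum[OF fin, symmetric])
  also have "\<dots> = (\<Sum>x\<in>X. \<Sum>B\<in>orbits G X \<phi>. \<pi> x * c (?O x) B)"
  proof (intro sum.cong refl)
    fix x B assume B: "B \<in> orbits G X \<phi>"
    have "(\<Sum>y\<in>B. \<pi> x * \<pi> y / ?m (?O y) * c (?O x) (?O y))
        = (\<Sum>y\<in>B. \<pi> y * (\<pi> x * c (?O x) B / ?m B))"
      using ga.orbits_elem[OF B] by (intro sum.cong refl) (simp add: field_simps)
    also have "\<dots> = ?m B * (\<pi> x * c (?O x) B / ?m B)"
      unfolding mass_def by (rule sum_distrib_right[symmetric])
    also have "\<dots> = \<pi> x * c (?O x) B" using mpos[OF B] by simp
    finally show "(\<Sum>y\<in>B. \<pi> x * \<pi> y / ?m (?O y) * c (?O x) (?O y)) = \<pi> x * c (?O x) B" .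
  qed
  also have "\<dots> = (\<Sum>A\<in>orbits G X \<phi>. \<Sum>x\<in>A. \<Sum>B\<in>orbits G X \<phi>. \<pi> x * c (?O x) B)"
    by (rule ga.disjoint_sum[OF fin, symmetric])
  also have "\<dots> = (\<Sum>A\<in>orbits G X \<phi>. \<Sum>B\<in>orbits G X \<phi>. ?m A * c A B)"
  proof (intro sum.cong refl)
    fix A assume A: "A \<in> orbits G X \<phi>"
    have "(\<Sum>x\<in>A. \<Sum>B\<in>orbits G X \<phi>. \<pi> x * c (?O x) B) = (\<Sum>x\<in>A. \<Sum>B\<in>orbits G X \<phi>. \<pi> x * c A B)"
      using ga.orbits_elem[OF A] by (intro sum.cong refl) simp
    also have "\<dots> = (\<Sum>B\<in>orbits G X \<phi>. \<Sum>x\<in>A. \<pi> x * c A B)" by (rule sum.swap)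
    also have "\<dots> = (\<Sum>B\<in>orbits G X \<phi>. ?m A * c A B)"
      unfolding mass_def by (intro sum.cong refl sum_distrib_right[symmetric])
    finally show "(\<Sum>x\<in>A. \<Sum>B\<in>orbits G X \<phi>. \<pi> x * c (?O x) B) = (\<Sum>B\<in>orbits G X \<phi>. ?m A * c A B)" .
  qed
  also have "\<dots> = KL_div (orbits G X \<phi>) (lumped_dist \<pi>) ?Q (const_rows (lumped_dist \<pi>))"
    unfolding KL_div_def c_def const_rows_def lumped_dist_def by (intro sum.cong refl) simp
  finally show ?thesis .
qed

end
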